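(* Assume that for every $t$ the local noises $w^1_t,\ldots,w^n_t$ are exchangeable. For any realization $x_{1:t},y_{1:t},a_{1:t}$, $t\in\mathbb{N}$, and irrespective of the strategy $g$, $$\mathbb{E}\big[c(m_t,\hat m_t,a_t)\mid x_{1:t},y_{1:t},a_{1:t}\big]=\hat c(x_t,y_t,a_t):=\sum_{m\in\mathcal{M}(n)}c\big(m,h(T_{\mathsf m}^{y_t}(\cdot,x_t)),a_t\big)\,T_{\mathsf m}^{y_t}(m,x_t).$$
   Context: Setting: $n$ nodes with states $s^i_t$ in a finite set $\mathcal{S}\subset\mathbb{R}$, time $t\in\mathbb{N}$; empirical distribution $m_t(s)=\frac1n\sum_i\mathbb{1}\{s^i_t=s\}\in\mathcal{M}(n)$ (probability vectors on $\mathcal{S}$ with entries in $\{0,\frac1n,\ldots,1\}$); dynamics $s^i_{t+1}=f(s^i_t,m_t,w^i_t)$ with local noise $w^i_t$ in a finite set $\mathcal{W}$. Action $a_t\in\{0,1\}$. Observations $o_t\in\mathcal{M}(n)\cup\{\mathtt{blank}\}$: $o_1=m_1$; if $a_t=0$ then $o_{t+1}=\mathtt{blank}$; if $a_t=1$ then $o_{t+1}=m_{t+1}$ with probability $q\in[0,1]$, else $\mathtt{blank}$. Strategy $a_t=g_t(o_{1:t},a_{1:t-1})$. Primitive random variables are mutually independent. Estimate $\hat m_t=h(\mathbb{P}(m_t\mid o_{1:t},a_{1:t-1}))\in\mathcal{M}(n)$ for a fixed function $h$ on probability distributions over $\mathcal{M}(n)$. Per-step cost $c:\mathcal{M}(n)^2\times\{0,1\}\to\mathbb{R}_{\ge0}$.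 $T_{\mathsf m}(m',m)=\mathbb{P}(m_{t+1}=m'\mid m_t=m)$ is the transition matrix of the Markov chain $m_t$, $T_{\mathsf m}^y$ its $y$-th power. $x_t$ is the last non-blank observation up to $t$ and $y_t$ the number of blanks since, $(x_1,y_1)=(m_1,0)$. *)

theory Defs
  imports "HOL-Probability.Probability"
begin

definition emp :: "nat \<Rightarrow> (nat \<Rightarrow> real) \<Rightarrow> (real \<Rightarrow> real)" where
  "emp n s = (\<lambda>x. real (card {i. i < n \<and> s i = x}) / real n)"

definition Mset :: "nat \<Rightarrow> real set \<Rightarrow> (real \<Rightarrow> real) set" where
  "Mset n S = {m. (\<forall>x. x \<notin> S \<longrightarrow> m x = 0) \<and> (\<forall>x. \<exists>k\<le>n. m x = real k / real n)
                  \<and> (\<Sum>x\<in>S. m x) = 1}"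

text \<open>Outcomes of the primitive random variables:
  (initial states s_1, noise vectors w_tau (tau = 1,2,...), observation coins b_tau (tau = 2,3,...)).
  Observations: None = blank, Some m = m.\<close>
type_synonym ('w) outcome = "(nat \<Rightarrow> real) \<times> (nat \<Rightarrow> nat \<Rightarrow> 'w) \<times> (nat \<Rightarrow> bool)"

text \<open>Joint state vector at time tau (tau \<ge> 1; index 0 is a dummy equal to time 1).\<close>
primrec st :: "(real \<Rightarrow> (real \<Rightarrow> real) \<Rightarrow> 'w \<Rightarrow> real) \<Rightarrow> nat \<Rightarrow> 'w outcome \<Rightarrow> nat \<Rightarrow> (nat \<Rightarrow> real)" where
  "st f n \<omega> 0 = fst \<omega>"
| "st f n \<omega> (Suc k) = (if k = 0 then fst \<omega>
      else (\<lambda>i. f (st f n \<omega> k i) (emp n (st f n \<omega> k)) (fst (snd \<omega>) k i)))"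

definition mproc :: "(real \<Rightarrow> (real \<Rightarrow> real) \<Rightarrow> 'w \<Rightarrow> real) \<Rightarrow> nat \<Rightarrow> 'w outcome \<Rightarrow> nat \<Rightarrow> (real \<Rightarrow> real)" where
  "mproc f n \<omega> tau = emp n (st f n \<omega> tau)"

text \<open>hist ... tau = (o_{1:tau}, a_{1:tau}) under strategy g, where a_tau = g tau o_{1:tau} a_{1:tau-1}.\<close>
primrec hist :: "(real \<Rightarrow> (real \<Rightarrow> real) \<Rightarrow> 'w \<Rightarrow> real) \<Rightarrow> nat
    \<Rightarrow> (nat \<Rightarrow> (real \<Rightarrow> real) option list \<Rightarrow> bool list \<Rightarrow> bool)
    \<Rightarrow> 'w outcome \<Rightarrow> nat \<Rightarrow> (real \<Rightarrow> real) option list \<times> bool list" where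
  "hist f n g \<omega> 0 = ([], [])"
| "hist f n g \<omega> (Suc k) =
    (let os = fst (hist f n g \<omega> k); as = snd (hist f n g \<omega> k);
         ob = (if k = 0 then Some (mproc f n \<omega> 1)
              else if last as \<and> snd (snd \<omega>) (Suc k) then Some (mproc f n \<omega> (Suc k)) else None)
     in (os @ [ob], as @ [g (Suc k) (os @ [ob]) as]))"

text \<open>(x_tau, y_tau): last non-blank observation and number of blanks since.\<close>
fun xystep :: "(real \<Rightarrow> real) \<times> nat \<Rightarrow> (real \<Rightarrow> real) option \<Rightarrow> (real \<Rightarrow> real) \<times> nat" where
  "xystep (x, y) None = (x, Suc y)"
| "xystep (x, y) (Some m) = (m, 0)"

definition xyseq :: "(real \<Rightarrow> real) option list \<Rightarrow> ((real \<Rightarrow> real) \<times> nat) list" where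
  "xyseq os = map (\<lambda>k. fold (\<lambda>ob p. xystep p ob) (take k os) (undefined, 0)) [1..<Suc (length os)]"

definition law :: "(nat \<Rightarrow> real) pmf \<Rightarrow> (nat \<Rightarrow> 'w) pmf \<Rightarrow> real \<Rightarrow> nat \<Rightarrow> 'w outcome pmf" where
  "law P0 W q N = pair_pmf P0 (pair_pmf (Pi_pmf {..<N} undefined (\<lambda>_. W))
                                        (Pi_pmf {..<N} False (\<lambda>_. bernoulli_pmf q)))"

definition cprob :: "'a pmf \<Rightarrow> ('a \<Rightarrow> 'b) \<Rightarrow> ('a \<Rightarrow> 'c) \<Rightarrow> 'a \<Rightarrow> 'b \<Rightarrow> real" where
  "cprob \<Omega> X Y \<omega> v = measure_pmf.prob \<Omega> {\<omega>'. X \<omega>' = v \<and> Y \<omega>' = Y \<omega>}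
                      / measure_pmf.prob \<Omega> {\<omega>'. Y \<omega>' = Y \<omega>}"

definition mhat where
  "mhat \<Omega> f n g h \<omega> t = h (cprob \<Omega> (\<lambda>\<omega>'. mproc f n \<omega>' t)
      (\<lambda>\<omega>'. (fst (hist f n g \<omega>' t), butlast (snd (hist f n g \<omega>' t)))) \<omega>)"

text \<open>y-th power of a transition matrix T (T m' m = probability of m \<rightarrow> m') over the finite state set M.\<close>
fun tpow :: "((real \<Rightarrow> real) \<Rightarrow> (real \<Rightarrow> real) \<Rightarrow> real) \<Rightarrow> (real \<Rightarrow> real) set \<Rightarrow> nat
    \<Rightarrow> (real \<Rightarrow> real) \<Rightarrow> (real \<Rightarrow> real) \<Rightarrow> real" where
  "tpow T M 0 m' m = (if m' = m then 1 else 0)"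
| "tpow T M (Suc y) m' m = (\<Sum>z\<in>M. T m' z * tpow T M y z m)"

definition chat where
  "chat c h T M x y a = (\<Sum>m\<in>M. c m (h (\<lambda>m'. tpow T M y m' x)) a * tpow T M y m x)"

end

theory Submission
  imports Defs
begin


lemma Pi_resample0:
  assumes "finite R" "i \<notin> R"
  shows "bind_pmf (Pi_pmf (insert i R) d p) (\<lambda>f. map_pmf (\<lambda>y. f(i:=y)) (p i)) = Pi_pmf (insert i R) d p"
    apply (simp only: Pi_pmf_insert'[OF assms] bind_assoc_pmf bind_return_pmf map_pmf_def)
    apply (simp add: bind_assoc_pmf bind_return_pmf)
    apply (subst bind_commute_pmf)
    apply (simp add: bind_assoc_pmf bind_return_pmf)
    done

lemma Pi_resample:
  assumes "finite A" "i \<in> A"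
  shows "bind_pmf (Pi_pmf A d p) (\<lambda>f. map_pmf (\<lambda>y. f(i:=y)) (p i)) = Pi_pmf A d p"
  using Pi_resample0[of "A - {i}" i d p] assms by (simp add: insert_absorb)

lemma measure_bind_real: "measure_pmf.prob (bind_pmf M N) X = (\<integral>x. measure_pmf.prob (N x) X \<partial>M)"
proof -
  have "emeasure (measure_pmf (bind_pmf M N)) X = (\<integral>\<^sup>+x. ennreal (measure_pmf.prob (N x) X) \<partial>M)"
    by (subst emeasure_bind_pmf) (simp add: measure_pmf.emeasure_eq_measure)
  also have "\<dots> = ennreal (\<integral>x. measure_pmf.prob (N x) X \<partial>M)"
    by (rule nn_integral_eq_integral) (auto intro!: measure_pmf.integrable_const_bound[where B=1])
  finally show ?thesis
    by (simp add: measure_pmf.emeasure_eq_measure)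
qed

definition updw :: "'w outcome \<Rightarrow> nat \<Rightarrow> (nat \<Rightarrow> 'w) \<Rightarrow> 'w outcome" where
  "updw \<omega> i w' = (fst \<omega>, (fst (snd \<omega>))(i := w'), snd (snd \<omega>))"

lemma law_resample:
  assumes "i < N"
  shows "bind_pmf (law P0 W q N) (\<lambda>\<omega>. map_pmf (updw \<omega> i) W) = law P0 W q N"
proof -
  have "law P0 W q N = pair_pmf P0 (pair_pmf (bind_pmf (Pi_pmf {..<N} undefined (\<lambda>_. W)) (\<lambda>f. map_pmf (\<lambda>y. f(i:=y)) W))
                                        (Pi_pmf {..<N} False (\<lambda>_. bernoulli_pmf q)))"
    unfolding law_def using Pi_resample[of "{..<N}" i undefined "\<lambda>_. W"] assms by simp
  also have "\<dots> = bind_pmf (law P0 W q N) (\<lambda>\<omega>. map_pmf (updw \<omega> i) W)"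
    unfolding law_def pair_pmf_def updw_def map_pmf_def
    apply (simp add: bind_assoc_pmf bind_return_pmf)
    apply (rule bind_pmf_cong[OF refl])
    apply (rule bind_pmf_cong[OF refl])
    apply (rule bind_commute_pmf)
    done
  finally show ?thesis ..
qed



lemma emp_perm:
  assumes p: "p permutes {..<n}"
  shows "emp n (u \<circ> p) = emp n u"
proof -
  have "card {i. i < n \<and> u (p i) = x} = card {i. i < n \<and> u i = x}" for x
  proof -
    have "p ` {i. i < n \<and> u (p i) = x} = {i. i < n \<and> u i = x}"
    proof safe
      fix i assume "i < n" then show "p i < n" using permutes_in_image[OF p, of i] by simp
    next
      fix i assume "i < n" "x = u i"
      then show "i \<in> p ` {j. j < n \<and> u (p j) = u i}"
      proof (intro image_eqI[where x="inv p i"])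
        show "i = p (inv p i)" using permutes_inverses(1)[OF p] by simp
        show "inv p i \<in> {j. j < n \<and> u (p j) = u i}"
          using \<open>i < n\<close> permutes_inverses(1)[OF p] permutes_in_image[OF permutes_inv[OF p], of i] by simp
      qed
    qed
    moreover have "inj_on p {i. i < n \<and> u (p i) = x}"
      using permutes_inj[OF p] by (simp add: inj_def inj_on_def)
    ultimately show ?thesis using card_image[of p "{i. i < n \<and> u (p i) = x}"] by simp
  qed
  then show ?thesis unfolding emp_def by auto
qed

lemma emp_cong: "(\<And>i. i < n \<Longrightarrow> u i = u' i) \<Longrightarrow> emp n u = emp n u'"
  unfolding emp_def by (intro ext arg_cong[where f="\<lambda>k. real k / real n"] arg_cong[where f=card]) auto

lemma count_mset_map_upt: "count (mset (map s [0..<n])) x = card {i. i < n \<and> s i = x}"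
proof -
  have "count (mset (map s [0..<n])) x = length (filter ((=) x) (map s [0..<n]))"
    by (simp only: count_mset count_list_eq_length_filter)
  also have "\<dots> = card {i. i < length (map s [0..<n]) \<and> x = (map s [0..<n]) ! i}"
    by (rule length_filter_conv_card)
  also have "{i. i < length (map s [0..<n]) \<and> x = (map s [0..<n]) ! i} = {i. i < n \<and> s i = x}"
    by auto
  finally show ?thesis .
qed

lemma emp_eq_perm:
  assumes "n \<ge> 1" "emp n s = emp n s'"
  shows "\<exists>p. p permutes {..<n} \<and> (\<forall>i<n. s' i = s (p i))"
proof -
  have "card {i. i < n \<and> s i = x} = card {i. i < n \<and> s' i = x}" for x
  proof -
    have "real (card {i. i < n \<and> s i = x}) / real n = real (card {i. i < n \<and> s' i = x}) / real n"
      using fun_cong[OF assms(2), of x] unfolding emp_def .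
    then show ?thesis using assms(1) by (simp add: divide_cancel_right)
  qed
  then have "mset (map s' [0..<n]) = mset (map s [0..<n])"
    by (intro multiset_eqI) (simp only: count_mset_map_upt)
  then obtain p where p1: "p permutes {..<length (map s [0..<n])}"
      and p2: "permute_list p (map s [0..<n]) = map s' [0..<n]"
    by (rule mset_eq_permutation)
  have pn: "p permutes {..<n}" using p1 by simp
  have "s' i = s (p i)" if "i < n" for i
  proof -
    have "s' i = map s' [0..<n] ! i" using that by simp
    also have "\<dots> = permute_list p (map s [0..<n]) ! i" using p2 by simp
    also have "\<dots> = map s [0..<n] ! (p i)" using that p1 by (simp add: permute_list_nth)
    also have "\<dots> = s (p i)" using that permutes_in_image[OF pn, of i] by simp
    finally show ?thesis .
  qed
  then show ?thesis using pn by blast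
qed

definition Kk :: "(real \<Rightarrow> (real \<Rightarrow> real) \<Rightarrow> 'w \<Rightarrow> real) \<Rightarrow> nat \<Rightarrow> (nat \<Rightarrow> 'w) pmf \<Rightarrow> (real \<Rightarrow> real) \<Rightarrow> (nat \<Rightarrow> real) \<Rightarrow> real" where
  "Kk f n W v s = measure_pmf.prob W {w'. emp n (\<lambda>j. f (s j) (emp n s) (w' j)) = v}"

lemma Kk_perm:
  assumes n: "n \<ge> 1" and exch: "\<forall>\<sigma>. \<sigma> permutes {..<n} \<longrightarrow> map_pmf (\<lambda>w. w \<circ> \<sigma>) W = W"
    and e: "emp n s = emp n s'"
  shows "Kk f n W v s = Kk f n W v s'"
proof -
  obtain p where p: "p permutes {..<n}" and ps: "\<And>i. i < n \<Longrightarrow> s' i = s (p i)"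
    using emp_eq_perm[OF n e] by blast
  have ip: "inv p permutes {..<n}" using p by (simp add: permutes_inv)
  have "Kk f n W v s = measure_pmf.prob (map_pmf (\<lambda>w. w \<circ> inv p) W) {w'. emp n (\<lambda>j. f (s j) (emp n s) (w' j)) = v}"
    using exch ip unfolding Kk_def by simp
  also have "\<dots> = measure_pmf.prob W {w'. emp n (\<lambda>j. f (s j) (emp n s) (w' (inv p j))) = v}"
    by (simp add: vimage_def)
  also have "\<dots> = measure_pmf.prob W {w'. emp n (\<lambda>j. f (s' j) (emp n s') (w' j)) = v}"
  proof -
    have "emp n (\<lambda>j. f (s j) (emp n s) (w' (inv p j))) = emp n (\<lambda>j. f (s' j) (emp n s') (w' j))" for w'
    proof -
      have "emp n (\<lambda>j. f (s j) (emp n s) (w' (inv p j))) = emp n ((\<lambda>j. f (s j) (emp n s) (w' (inv p j))) \<circ> p)"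
        using emp_perm[OF p] by simp
      also have "\<dots> = emp n (\<lambda>j. f (s' j) (emp n s') (w' j))"
        using ps e permutes_inverses(2)[OF p] by (intro emp_cong) simp
      finally show ?thesis .
    qed
    then show ?thesis by simp
  qed
  finally show ?thesis unfolding Kk_def .
qed



lemma st_updw: "k \<le> i \<Longrightarrow> st f n (updw \<omega> i w') k = st f n \<omega> k"
  by (induction k) (auto simp: updw_def)

lemma st_updw_Suc: "1 \<le> i \<Longrightarrow>
  st f n (updw \<omega> i w') (Suc i) = (\<lambda>j. f (st f n \<omega> i j) (emp n (st f n \<omega> i)) (w' j))"
  using st_updw[of i i f n \<omega> w'] by (auto simp: updw_def)

lemma hist_updw: "k \<le> i \<Longrightarrow> hist f n g (updw \<omega> i w') k = hist f n g \<omega> k"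
proof (induction k)
  case 0 then show ?case by simp
next
  case (Suc k)
  have m1: "mproc f n (updw \<omega> i w') 1 = mproc f n \<omega> 1"
    using Suc.prems st_updw[of 1 i f n \<omega> w'] by (simp add: mproc_def)
  have m2: "mproc f n (updw \<omega> i w') (Suc k) = mproc f n \<omega> (Suc k)"
    using Suc.prems st_updw[of "Suc k" i f n \<omega> w'] by (simp add: mproc_def)
  have b: "snd (snd (updw \<omega> i w')) = snd (snd \<omega>)" by (simp add: updw_def)
  show ?case using Suc m1 m2 b by (simp add: Let_def)
qed

definition kap where "kap f n W v z = Kk f n W v (SOME s. emp n s = z)"

lemma markov:
  assumes n: "n \<ge> 1" and exch: "\<forall>\<sigma>. \<sigma> permutes {..<n} \<longrightarrow> map_pmf (\<lambda>w. w \<circ> \<sigma>) W = W"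
    and tau: "1 \<le> \<tau>" "\<tau> < N"
    and Ainv: "\<And>\<omega> w'. updw \<omega> \<tau> w' \<in> A \<longleftrightarrow> \<omega> \<in> A"
    and Az: "\<And>\<omega>. \<omega> \<in> A \<Longrightarrow> mproc f n \<omega> \<tau> = z"
  shows "measure_pmf.prob (law P0 W q N) {\<omega>. mproc f n \<omega> (Suc \<tau>) = v \<and> \<omega> \<in> A}
       = kap f n W v z * measure_pmf.prob (law P0 W q N) A"
proof -
  let ?\<Omega> = "law P0 W q N"
  let ?B = "{\<omega>. mproc f n \<omega> (Suc \<tau>) = v \<and> \<omega> \<in> A}"
  have "measure_pmf.prob ?\<Omega> ?B = measure_pmf.prob (bind_pmf ?\<Omega> (\<lambda>\<omega>. map_pmf (updw \<omega> \<tau>) W)) ?B"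
    by (simp only: law_resample[OF tau(2)])
  also have "\<dots> = (\<integral>\<omega>. measure_pmf.prob W (updw \<omega> \<tau> -` ?B) \<partial>?\<Omega>)"
    by (simp add: measure_bind_real)
  also have "\<dots> = (\<integral>\<omega>. indicator A \<omega> * kap f n W v z \<partial>?\<Omega>)"
  proof (intro Bochner_Integration.integral_cong refl)
    fix \<omega>
    show "measure_pmf.prob W (updw \<omega> \<tau> -` ?B) = indicator A \<omega> * kap f n W v z"
    proof (cases "\<omega> \<in> A")
      case True
      have ez: "emp n (st f n \<omega> \<tau>) = z" using Az[OF True] by (simp add: mproc_def)
      have "updw \<omega> \<tau> -` ?B = {w'. emp n (\<lambda>j. f (st f n \<omega> \<tau> j) (emp n (st f n \<omega> \<tau>)) (w' j)) = v}"
      proof -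
        have "mproc f n (updw \<omega> \<tau> w') (Suc \<tau>) = emp n (\<lambda>j. f (st f n \<omega> \<tau> j) (emp n (st f n \<omega> \<tau>)) (w' j))" for w'
          unfolding mproc_def using st_updw_Suc[OF tau(1), of f n \<omega> w'] by simp
        then show ?thesis using True Ainv by auto
      qed
      then have "measure_pmf.prob W (updw \<omega> \<tau> -` ?B) = Kk f n W v (st f n \<omega> \<tau>)"
        by (simp add: Kk_def)
      also have "\<dots> = kap f n W v z"
        unfolding kap_def
      proof (rule Kk_perm[OF n exch])
        show "emp n (st f n \<omega> \<tau>) = emp n (SOME s. emp n s = z)"
          using ez someI[of "\<lambda>s. emp n s = z" "st f n \<omega> \<tau>"] by simp
      qed
      finally show ?thesis using True by simp
    next
      case False
      then have e: "updw \<omega> \<tau> -` ?B = {}" using Ainv by auto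
      show ?thesis using False by (simp only: e) simp
    qed
  qed
  also have "\<dots> = kap f n W v z * measure_pmf.prob ?\<Omega> A"
    by simp
  finally show ?thesis .
qed



lemma prob_split:
  assumes "finite M" "\<And>\<omega>. \<omega> \<in> set_pmf p \<Longrightarrow> F \<omega> \<in> M"
  shows "measure_pmf.prob p A = (\<Sum>z\<in>M. measure_pmf.prob p {\<omega>\<in>A. F \<omega> = z})"
proof -
  have "measure_pmf.prob p A = measure_pmf.prob p (A \<inter> set_pmf p)"
    by (simp add: measure_Int_set_pmf)
  also have "A \<inter> set_pmf p = (\<Union>z\<in>M. {\<omega>\<in>A. F \<omega> = z} \<inter> set_pmf p)"
    using assms(2) by auto
  also have "measure_pmf.prob p \<dots> = (\<Sum>z\<in>M. measure_pmf.prob p ({\<omega>\<in>A. F \<omega> = z} \<inter> set_pmf p))"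
    by (rule measure_pmf.finite_measure_finite_Union) (auto simp: assms(1) disjoint_family_on_def)
  also have "\<dots> = (\<Sum>z\<in>M. measure_pmf.prob p {\<omega>\<in>A. F \<omega> = z})"
    by (simp add: measure_Int_set_pmf)
  finally show ?thesis .
qed

lemma prob_cong_pmf:
  assumes "\<And>\<omega>. \<omega> \<in> set_pmf p \<Longrightarrow> \<omega> \<in> A \<longleftrightarrow> \<omega> \<in> B"
  shows "measure_pmf.prob p A = measure_pmf.prob p B"
proof -
  have "A \<inter> set_pmf p = B \<inter> set_pmf p" using assms by auto
  then show ?thesis by (metis measure_Int_set_pmf)
qed

lemma finite_Mset: "finite S \<Longrightarrow> finite (Mset n S)"
proof -
  assume S: "finite S"
  let ?V = "(\<lambda>k. real k / real n) ` {..n}"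
  have "Mset n S \<subseteq> {m. \<forall>x. (x \<in> S \<longrightarrow> m x \<in> ?V) \<and> (x \<notin> S \<longrightarrow> m x = 0)}"
    unfolding Mset_def by auto
  moreover have "finite {m. \<forall>x. (x \<in> S \<longrightarrow> m x \<in> ?V) \<and> (x \<notin> S \<longrightarrow> m x = 0)}"
    by (rule finite_set_of_finite_funs) (use S in auto)
  ultimately show ?thesis by (rule finite_subset)
qed

lemma emp_in_Mset:
  assumes n: "n \<ge> 1" and s: "\<forall>i<n. s i \<in> S" and S: "finite S"
  shows "emp n s \<in> Mset n S"
proof -
  have A: "\<forall>x. x \<notin> S \<longrightarrow> emp n s x = 0"
  proof safe
    fix x assume "x \<notin> S"
    then have "{i. i < n \<and> s i = x} = {}" using s by auto
    then show "emp n s x = 0" by (simp add: emp_def)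
  qed
  have B: "\<forall>x. \<exists>k\<le>n. emp n s x = real k / real n"
  proof
    fix x
    have "card {i. i < n \<and> s i = x} \<le> card {..<n}" by (intro card_mono) auto
    then show "\<exists>k\<le>n. emp n s x = real k / real n" unfolding emp_def by auto
  qed
  have "(\<Sum>x\<in>S. card {i. i < n \<and> s i = x}) = card (\<Union>x\<in>S. {i. i < n \<and> s i = x})"
    by (rule card_UN_disjoint[symmetric]) (auto simp: S)
  also have "(\<Union>x\<in>S. {i. i < n \<and> s i = x}) = {..<n}" using s by auto
  finally have "(\<Sum>x\<in>S. real (card {i. i < n \<and> s i = x})) = real n"
    by (metis card_lessThan of_nat_sum)
  then have C: "(\<Sum>x\<in>S. emp n s x) = 1"
    using n by (simp add: emp_def sum_divide_distrib[symmetric])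
  show ?thesis using A B C unfolding Mset_def by blast
qed



definition stepH :: "(nat \<Rightarrow> (real \<Rightarrow> real) option list \<Rightarrow> bool list \<Rightarrow> bool) \<Rightarrow> nat
   \<Rightarrow> (real \<Rightarrow> real) option list \<times> bool list \<Rightarrow> (real \<Rightarrow> real) option \<Rightarrow> (real \<Rightarrow> real) option list \<times> bool list" where
  "stepH g k H ob = (fst H @ [ob], snd H @ [g (Suc k) (fst H @ [ob]) (snd H)])"

lemma hist_Suc: "1 \<le> k \<Longrightarrow> hist f n g \<omega> (Suc k) = stepH g k (hist f n g \<omega> k)
   (if last (snd (hist f n g \<omega> k)) \<and> snd (snd \<omega>) (Suc k) then Some (mproc f n \<omega> (Suc k)) else None)"
  by (simp add: stepH_def Let_def)

lemma hist_1: "hist f n g \<omega> 1 = ([Some (mproc f n \<omega> 1)], [g 1 [Some (mproc f n \<omega> 1)] []])"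
  by (simp add: Let_def)

definition xyf :: "(real \<Rightarrow> real) option list \<Rightarrow> (real \<Rightarrow> real) \<times> nat" where
  "xyf os = fold (\<lambda>ob p. xystep p ob) os (undefined, 0)"

lemma xyf_append: "xyf (os @ [ob]) = xystep (xyf os) ob"
  by (simp add: xyf_def)

lemma xyf_single: "xyf [Some m] = (m, 0)"
  by (simp add: xyf_def)

lemma length_xyseq: "length (xyseq os) = length os"
  by (auto simp add: xyseq_def Suc_le_eq)

lemma last_xyseq: "os \<noteq> [] \<Longrightarrow> last (xyseq os) = xyf os"
proof -
  assume "os \<noteq> []"
  then have "[1..<Suc (length os)] = [1..<length os] @ [length os]" by (simp add: Suc_le_eq)
  then show ?thesis by (simp add: xyseq_def xyf_def)
qed

lemma length_hist: "length (fst (hist f n g \<omega> k)) = k \<and> length (snd (hist f n g \<omega> k)) = k"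
  by (induction k) (simp_all add: Let_def)

lemma stepH_fst: "fst (stepH g k H ob) = fst H @ [ob]"
  by (simp add: stepH_def)

locale mf =
  fixes f :: "real \<Rightarrow> (real \<Rightarrow> real) \<Rightarrow> 'w::finite \<Rightarrow> real"
    and n :: nat and S :: "real set"
    and P0 :: "(nat \<Rightarrow> real) pmf" and W :: "(nat \<Rightarrow> 'w) pmf" and q :: real
    and T :: "(real \<Rightarrow> real) \<Rightarrow> (real \<Rightarrow> real) \<Rightarrow> real"
  assumes n_pos: "n \<ge> 1"
    and S_fin: "finite S"
    and f_S: "\<forall>x\<in>S. \<forall>m\<in>Mset n S. \<forall>w. f x m w \<in> S"
    and P0_S: "\<forall>s\<in>set_pmf P0. \<forall>i<n. s i \<in> S"
    and exch: "\<forall>\<sigma>. \<sigma> permutes {..<n} \<longrightarrow> map_pmf (\<lambda>w. w \<circ> \<sigma>) W = W"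
    and T_def: "\<forall>\<tau>\<ge>1. \<forall>m m'.
        measure_pmf.prob (law P0 W q (Suc \<tau>)) {\<omega>. mproc f n \<omega> \<tau> = m} > 0 \<longrightarrow>
        measure_pmf.prob (law P0 W q (Suc \<tau>)) {\<omega>. mproc f n \<omega> (Suc \<tau>) = m' \<and> mproc f n \<omega> \<tau> = m}
          / measure_pmf.prob (law P0 W q (Suc \<tau>)) {\<omega>. mproc f n \<omega> \<tau> = m} = T m' m"
begin

abbreviation "M \<equiv> Mset n S"

lemma finM: "finite M" using finite_Mset[OF S_fin] .

lemma set_law: "\<omega> \<in> set_pmf (law P0 W q N) \<Longrightarrow> \<forall>i<n. fst \<omega> i \<in> S"
  using P0_S by (auto simp: law_def)

lemma st_good: "\<forall>i<n. fst \<omega> i \<in> S \<Longrightarrow> \<forall>i<n. st f n \<omega> k i \<in> S"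
proof (induction k)
  case 0 then show ?case by simp
next
  case (Suc k)
  have "emp n (st f n \<omega> k) \<in> M" using Suc emp_in_Mset[OF n_pos _ S_fin] by blast
  then show ?case using Suc f_S by auto
qed

lemma mproc_M: "\<omega> \<in> set_pmf (law P0 W q N) \<Longrightarrow> mproc f n \<omega> k \<in> M"
  unfolding mproc_def using emp_in_Mset[OF n_pos _ S_fin] st_good[OF set_law] by blast

lemma xy_good: "1 \<le> k \<Longrightarrow> \<omega> \<in> set_pmf (law P0 W q N) \<Longrightarrow>
   fst (xyf (fst (hist f n g \<omega> k))) \<in> M \<and> snd (xyf (fst (hist f n g \<omega> k))) < k"
proof (induction k rule: nat_induct_at_least)
  case base
  then show ?case using mproc_M by (simp add: xyf_single Let_def)
next
  case (Suc k)
  then show ?case using mproc_M[OF Suc.prems(1)] Suc.IH Suc.hyps hist_Suc[OF Suc.hyps, of f n g \<omega>]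
    by (cases "xyf (fst (hist f n g \<omega> k))") (auto simp del: hist.simps simp: stepH_fst xyf_append)
qed

lemma m_horizon:
  assumes "1 \<le> \<tau>" "\<tau> \<le> N" "\<tau> \<le> N'"
  shows "measure_pmf.prob (law P0 W q N) {\<omega>. mproc f n \<omega> \<tau> = z} = measure_pmf.prob (law P0 W q N') {\<omega>. mproc f n \<omega> \<tau> = z}"
  using assms
proof (induction \<tau> arbitrary: z rule: nat_induct_at_least)
  case base
  have "measure_pmf.prob (law P0 W q K) {\<omega>. mproc f n \<omega> 1 = z} = measure_pmf.prob P0 {s. emp n s = z}" for K
  proof -
    have "measure_pmf.prob (law P0 W q K) {\<omega>. mproc f n \<omega> 1 = z}
        = measure_pmf.prob (map_pmf fst (law P0 W q K)) {s. emp n s = z}"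
      by (simp add: mproc_def vimage_def)
    also have "map_pmf fst (law P0 W q K) = P0" by (simp add: law_def map_fst_pair_pmf)
    finally show ?thesis .
  qed
  then show ?case by simp
next
  case (Suc k)
  have eq: "measure_pmf.prob (law P0 W q K) {\<omega>. mproc f n \<omega> (Suc k) = z}
      = (\<Sum>z'\<in>M. kap f n W z z' * measure_pmf.prob (law P0 W q K) {\<omega>. mproc f n \<omega> k = z'})"
    if "Suc k \<le> K" for K
  proof -
    have "measure_pmf.prob (law P0 W q K) {\<omega>. mproc f n \<omega> (Suc k) = z}
        = (\<Sum>z'\<in>M. measure_pmf.prob (law P0 W q K) {\<omega>\<in>{\<omega>. mproc f n \<omega> (Suc k) = z}. mproc f n \<omega> k = z'})"
      by (rule prob_split[OF finM mproc_M])
    also have "\<dots> = (\<Sum>z'\<in>M. kap f n W z z' * measure_pmf.prob (law P0 W q K) {\<omega>. mproc f n \<omega> k = z'})"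
    proof (rule sum.cong[OF refl])
      fix z' assume "z' \<in> M"
      have "measure_pmf.prob (law P0 W q K) {\<omega>. mproc f n \<omega> (Suc k) = z \<and> \<omega> \<in> {\<omega>. mproc f n \<omega> k = z'}}
          = kap f n W z z' * measure_pmf.prob (law P0 W q K) {\<omega>. mproc f n \<omega> k = z'}"
        by (rule markov[OF n_pos exch]) (use Suc.hyps that in \<open>auto simp: mproc_def st_updw\<close>)
      then show "measure_pmf.prob (law P0 W q K) {\<omega>\<in>{\<omega>. mproc f n \<omega> (Suc k) = z}. mproc f n \<omega> k = z'}
          = kap f n W z z' * measure_pmf.prob (law P0 W q K) {\<omega>. mproc f n \<omega> k = z'}"
        by (simp add: conj_commute)
    qed
    finally show ?thesis .
  qed
  show ?case using eq[OF Suc.prems(1)] eq[OF Suc.prems(2)] Suc.IH[of] Suc.prems by simp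
qed

lemma T_kap:
  assumes "1 \<le> \<tau>" "\<tau> < N" "measure_pmf.prob (law P0 W q N) {\<omega>. mproc f n \<omega> \<tau> = z} > 0"
  shows "T v z = kap f n W v z"
proof -
  let ?P = "measure_pmf.prob (law P0 W q (Suc \<tau>))"
  have pos: "?P {\<omega>. mproc f n \<omega> \<tau> = z} > 0"
    using assms m_horizon[of \<tau> N "Suc \<tau>" z] by simp
  have "?P {\<omega>. mproc f n \<omega> (Suc \<tau>) = v \<and> \<omega> \<in> {\<omega>. mproc f n \<omega> \<tau> = z}}
       = kap f n W v z * ?P {\<omega>. mproc f n \<omega> \<tau> = z}"
    by (rule markov[OF n_pos exch]) (use assms in \<open>auto simp: mproc_def st_updw\<close>)
  then have "?P {\<omega>. mproc f n \<omega> (Suc \<tau>) = v \<and> mproc f n \<omega> \<tau> = z} / ?P {\<omega>. mproc f n \<omega> \<tau> = z} = kap f n W v z"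
    using pos by simp
  moreover have "?P {\<omega>. mproc f n \<omega> (Suc \<tau>) = v \<and> mproc f n \<omega> \<tau> = z} / ?P {\<omega>. mproc f n \<omega> \<tau> = z} = T v z"
    using T_def assms(1) pos by blast
  ultimately show ?thesis by simp
qed

lemma markov_T:
  assumes tau: "1 \<le> \<tau>" "\<tau> < N"
    and Ainv: "\<And>\<omega> w'. updw \<omega> \<tau> w' \<in> A \<longleftrightarrow> \<omega> \<in> A"
    and Az: "\<And>\<omega>. \<omega> \<in> A \<Longrightarrow> mproc f n \<omega> \<tau> = z"
  shows "measure_pmf.prob (law P0 W q N) {\<omega>. mproc f n \<omega> (Suc \<tau>) = v \<and> \<omega> \<in> A}
       = T v z * measure_pmf.prob (law P0 W q N) A"
proof (cases "measure_pmf.prob (law P0 W q N) {\<omega>. mproc f n \<omega> \<tau> = z} > 0")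
  case True
  then show ?thesis using T_kap[OF tau True] markov[OF n_pos exch tau Ainv Az] by simp
next
  case False
  let ?P = "measure_pmf.prob (law P0 W q N)"
  have z: "?P {\<omega>. mproc f n \<omega> \<tau> = z} = 0" using False measure_nonneg[of "measure_pmf (law P0 W q N)" "{\<omega>. mproc f n \<omega> \<tau> = z}"] by linarith
  have "?P A \<le> ?P {\<omega>. mproc f n \<omega> \<tau> = z}" using Az by (intro measure_pmf.finite_measure_mono) auto
  then have A0: "?P A = 0" using z measure_nonneg[of "measure_pmf (law P0 W q N)" A] by linarith
  have "?P {\<omega>. mproc f n \<omega> (Suc \<tau>) = v \<and> \<omega> \<in> A} \<le> ?P A" by (intro measure_pmf.finite_measure_mono) auto
  then have "?P {\<omega>. mproc f n \<omega> (Suc \<tau>) = v \<and> \<omega> \<in> A} = 0" using A0 measure_nonneg[of "measure_pmf (law P0 W q N)" "{\<omega>. mproc f n \<omega> (Suc \<tau>) = v \<and> \<omega> \<in> A}"] by linarith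
  then show ?thesis using A0 by simp
qed

end


declare hist.simps(2) [simp del]

definition fb :: "'w outcome \<Rightarrow> nat \<Rightarrow> nat \<Rightarrow> bool" where
  "fb \<omega> k = (\<lambda>j. snd (snd \<omega>) (Suc k + j))"

lemma sum_delta_mult: "finite A \<Longrightarrow> (\<Sum>x\<in>A. (if v = x then 1 else 0) * (a x::real)) = (if v \<in> A then a v else 0)"
proof -
  assume A: "finite A"
  have "(\<lambda>x. (if v = x then 1 else 0) * (a x::real)) = (\<lambda>x. if v = x then a x else 0)" by auto
  have "(\<Sum>x\<in>A. (if v = x then 1 else 0) * (a x::real)) = (\<Sum>x\<in>A. if v = x then a x else 0)" by (rule sum.cong) auto
  also have "\<dots> = (if v \<in> A then a v else 0)" using A by (rule sum.delta')
  finally show ?thesis .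
qed

context mf
begin

lemma prob_notM:
  assumes "v \<notin> M"
  shows "measure_pmf.prob (law P0 W q N) {\<omega>. mproc f n \<omega> k = v \<and> R \<omega>} = 0"
proof -
  have "measure_pmf.prob (law P0 W q N) {\<omega>. mproc f n \<omega> k = v \<and> R \<omega>} = measure_pmf.prob (law P0 W q N) {}"
    using mproc_M assms by (intro prob_cong_pmf) auto
  then show ?thesis by simp
qed

lemma inv_base:
  "measure_pmf.prob (law P0 W q N) {\<omega>. mproc f n \<omega> 1 = v \<and> \<Phi> (hist f n g \<omega> 1) (fb \<omega> 1)}
   = (\<Sum>x\<in>M. \<Sum>y\<le>1. tpow T M y v x * measure_pmf.prob (law P0 W q N)
        {\<omega>. xyf (fst (hist f n g \<omega> 1)) = (x,y) \<and> \<Phi> (hist f n g \<omega> 1) (fb \<omega> 1)})"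
proof -
  let ?P = "measure_pmf.prob (law P0 W q N)"
  have xy1: "xyf (fst (hist f n g \<omega> 1)) = (mproc f n \<omega> 1, 0)" for \<omega>
    by (simp only: hist_1) (simp add: xyf_single)
  have "(\<Sum>x\<in>M. \<Sum>y\<le>1. tpow T M y v x * ?P {\<omega>. xyf (fst (hist f n g \<omega> 1)) = (x,y) \<and> \<Phi> (hist f n g \<omega> 1) (fb \<omega> 1)})
      = (\<Sum>x\<in>M. (if v = x then 1 else 0) * ?P {\<omega>. mproc f n \<omega> 1 = x \<and> \<Phi> (hist f n g \<omega> 1) (fb \<omega> 1)})"
  proof (rule sum.cong[OF refl])
    fix x
    have "{\<omega>. xyf (fst (hist f n g \<omega> 1)) = (x,1) \<and> \<Phi> (hist f n g \<omega> 1) (fb \<omega> 1)} = {}" by (simp only: xy1) simp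
    then show "(\<Sum>y\<le>1. tpow T M y v x * ?P {\<omega>. xyf (fst (hist f n g \<omega> 1)) = (x,y) \<and> \<Phi> (hist f n g \<omega> 1) (fb \<omega> 1)})
      = (if v = x then 1 else 0) * ?P {\<omega>. mproc f n \<omega> 1 = x \<and> \<Phi> (hist f n g \<omega> 1) (fb \<omega> 1)}"
      by (simp only: xy1) (simp add: eq_commute)
  qed
  also have "\<dots> = (if v \<in> M then ?P {\<omega>. mproc f n \<omega> 1 = v \<and> \<Phi> (hist f n g \<omega> 1) (fb \<omega> 1)} else 0)"
    by (rule sum_delta_mult[OF finM])
  also have "\<dots> = ?P {\<omega>. mproc f n \<omega> 1 = v \<and> \<Phi> (hist f n g \<omega> 1) (fb \<omega> 1)}"
    using prob_notM by auto
  finally show ?thesis by simp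
qed

lemma inv_step:
  assumes k: "1 \<le> k" "Suc k < N"
    and IH: "\<And>\<Phi> v. measure_pmf.prob (law P0 W q N) {\<omega>. mproc f n \<omega> k = v \<and> \<Phi> (hist f n g \<omega> k) (fb \<omega> k)}
       = (\<Sum>x\<in>M. \<Sum>y\<le>k. tpow T M y v x * measure_pmf.prob (law P0 W q N)
        {\<omega>. xyf (fst (hist f n g \<omega> k)) = (x,y) \<and> \<Phi> (hist f n g \<omega> k) (fb \<omega> k)})"
  shows "measure_pmf.prob (law P0 W q N) {\<omega>. mproc f n \<omega> (Suc k) = v \<and> \<Phi> (hist f n g \<omega> (Suc k)) (fb \<omega> (Suc k))}
       = (\<Sum>x\<in>M. \<Sum>y\<le>Suc k. tpow T M y v x * measure_pmf.prob (law P0 W q N)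
        {\<omega>. xyf (fst (hist f n g \<omega> (Suc k))) = (x,y) \<and> \<Phi> (hist f n g \<omega> (Suc k)) (fb \<omega> (Suc k))})"
proof -
  let ?P = "measure_pmf.prob (law P0 W q N)"
  define H where "H (\<omega>::'w outcome) = hist f n g \<omega> k" for \<omega>
  define B where "B (\<omega>::'w outcome) = fb \<omega> k" for \<omega>
  define D where "D (\<omega>::'w outcome) = (last (snd (H \<omega>)) \<and> B \<omega> 0)" for \<omega>
  define m' where "m' \<omega> = mproc f n \<omega> (Suc k)" for \<omega>
  define \<Psi>0 where "\<Psi>0 h c = (\<not> (last (snd h) \<and> c 0) \<and> \<Phi> (stepH g k h None) (\<lambda>j. c (Suc j)))" for h c
  define \<Phi>S where "\<Phi>S \<omega> = \<Phi> (stepH g k (H \<omega>) (Some (m' \<omega>))) (\<lambda>j. B \<omega> (Suc j))" for \<omega>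
  have hS: "hist f n g \<omega> (Suc k) = stepH g k (H \<omega>) (if D \<omega> then Some (m' \<omega>) else None)" for \<omega>
    unfolding H_def D_def B_def m'_def fb_def using hist_Suc[OF k(1), of f n g \<omega>] by simp
  have fbS: "fb \<omega> (Suc k) = (\<lambda>j. B \<omega> (Suc j))" for \<omega>
    unfolding B_def fb_def by simp
  have xyS: "xyf (fst (hist f n g \<omega> (Suc k))) = (if D \<omega> then (m' \<omega>, 0) else (fst (xyf (fst (H \<omega>))), Suc (snd (xyf (fst (H \<omega>))))))" for \<omega>
    by (cases "xyf (fst (H \<omega>))") (simp del: hist.simps add: hS stepH_fst xyf_append)
  have PhiS: "\<Phi> (hist f n g \<omega> (Suc k)) (fb \<omega> (Suc k)) \<longleftrightarrow> (if D \<omega> then \<Phi>S \<omega> else \<Psi>0 (H \<omega>) (B \<omega>))" for \<omega>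
    unfolding hS fbS \<Phi>S_def \<Psi>0_def D_def by (simp del: hist.simps)

  have mk: "?P {\<omega>. m' \<omega> = v \<and> \<Psi>0 (H \<omega>) (B \<omega>)} = (\<Sum>z\<in>M. T v z * ?P {\<omega>. mproc f n \<omega> k = z \<and> \<Psi>0 (H \<omega>) (B \<omega>)})"
  proof -
    have "?P {\<omega>. m' \<omega> = v \<and> \<Psi>0 (H \<omega>) (B \<omega>)} = (\<Sum>z\<in>M. ?P {\<omega>\<in>{\<omega>. m' \<omega> = v \<and> \<Psi>0 (H \<omega>) (B \<omega>)}. mproc f n \<omega> k = z})"
      by (rule prob_split[OF finM mproc_M])
    also have "\<dots> = (\<Sum>z\<in>M. T v z * ?P {\<omega>. mproc f n \<omega> k = z \<and> \<Psi>0 (H \<omega>) (B \<omega>)})"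
    proof (rule sum.cong[OF refl])
      fix z
      have "?P {\<omega>. mproc f n \<omega> (Suc k) = v \<and> \<omega> \<in> {\<omega>. mproc f n \<omega> k = z \<and> \<Psi>0 (H \<omega>) (B \<omega>)}}
          = T v z * ?P {\<omega>. mproc f n \<omega> k = z \<and> \<Psi>0 (H \<omega>) (B \<omega>)}"
      proof (rule markov_T)
        show "1 \<le> k" "k < N" using k by auto
        show "updw \<omega> k w' \<in> {\<omega>. mproc f n \<omega> k = z \<and> \<Psi>0 (H \<omega>) (B \<omega>)} \<longleftrightarrow> \<omega> \<in> {\<omega>. mproc f n \<omega> k = z \<and> \<Psi>0 (H \<omega>) (B \<omega>)}" for \<omega> w'
        proof -
          have "mproc f n (updw \<omega> k w') k = mproc f n \<omega> k" by (simp add: mproc_def st_updw)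
          moreover have "H (updw \<omega> k w') = H \<omega>" by (simp add: H_def hist_updw)
          moreover have "B (updw \<omega> k w') = B \<omega>" by (simp add: B_def fb_def updw_def)
          ultimately show ?thesis by simp
        qed
      qed auto
      then show "?P {\<omega>\<in>{\<omega>. m' \<omega> = v \<and> \<Psi>0 (H \<omega>) (B \<omega>)}. mproc f n \<omega> k = z} = T v z * ?P {\<omega>. mproc f n \<omega> k = z \<and> \<Psi>0 (H \<omega>) (B \<omega>)}"
        unfolding m'_def by (simp add: conj_commute conj_left_commute)
    qed
    finally show ?thesis .
  qed

  have L: "?P {\<omega>. m' \<omega> = v \<and> \<Phi> (hist f n g \<omega> (Suc k)) (fb \<omega> (Suc k))}
      = ?P {\<omega>. D \<omega> \<and> m' \<omega> = v \<and> \<Phi>S \<omega>} + ?P {\<omega>. m' \<omega> = v \<and> \<Psi>0 (H \<omega>) (B \<omega>)}"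
  proof -
    have "{\<omega>. m' \<omega> = v \<and> \<Phi> (hist f n g \<omega> (Suc k)) (fb \<omega> (Suc k))}
        = {\<omega>. D \<omega> \<and> m' \<omega> = v \<and> \<Phi>S \<omega>} \<union> {\<omega>. m' \<omega> = v \<and> \<Psi>0 (H \<omega>) (B \<omega>)}"
      using PhiS by (auto simp: \<Psi>0_def D_def)
    then show ?thesis
      by (simp only:) (rule measure_pmf.finite_measure_Union, auto simp: \<Psi>0_def D_def)
  qed

  have R0: "?P {\<omega>. xyf (fst (hist f n g \<omega> (Suc k))) = (x,0) \<and> \<Phi> (hist f n g \<omega> (Suc k)) (fb \<omega> (Suc k))}
      = ?P {\<omega>. D \<omega> \<and> m' \<omega> = x \<and> \<Phi>S \<omega>}" for x
    by (rule arg_cong[where f="?P"]) (auto simp: xyS PhiS)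
  have R1: "?P {\<omega>. xyf (fst (hist f n g \<omega> (Suc k))) = (x, Suc y) \<and> \<Phi> (hist f n g \<omega> (Suc k)) (fb \<omega> (Suc k))}
      = ?P {\<omega>. xyf (fst (H \<omega>)) = (x, y) \<and> \<Psi>0 (H \<omega>) (B \<omega>)}" for x y
    by (rule arg_cong[where f="?P"]) (auto simp: xyS PhiS \<Psi>0_def D_def prod_eq_iff)

  have "(\<Sum>x\<in>M. \<Sum>y\<le>Suc k. tpow T M y v x * ?P
        {\<omega>. xyf (fst (hist f n g \<omega> (Suc k))) = (x,y) \<and> \<Phi> (hist f n g \<omega> (Suc k)) (fb \<omega> (Suc k))})
      = (\<Sum>x\<in>M. tpow T M 0 v x * ?P {\<omega>. D \<omega> \<and> m' \<omega> = x \<and> \<Phi>S \<omega>})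
        + (\<Sum>x\<in>M. \<Sum>y\<le>k. tpow T M (Suc y) v x * ?P {\<omega>. xyf (fst (H \<omega>)) = (x, y) \<and> \<Psi>0 (H \<omega>) (B \<omega>)})"
    by (simp only: sum.atMost_Suc_shift R0 R1 sum.distrib)
  also have "(\<Sum>x\<in>M. tpow T M 0 v x * ?P {\<omega>. D \<omega> \<and> m' \<omega> = x \<and> \<Phi>S \<omega>}) = ?P {\<omega>. D \<omega> \<and> m' \<omega> = v \<and> \<Phi>S \<omega>}"
  proof -
    have "(\<Sum>x\<in>M. tpow T M 0 v x * ?P {\<omega>. D \<omega> \<and> m' \<omega> = x \<and> \<Phi>S \<omega>})
        = (\<Sum>x\<in>M. (if v = x then 1 else 0) * ?P {\<omega>. D \<omega> \<and> m' \<omega> = x \<and> \<Phi>S \<omega>})"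
      by (rule sum.cong) auto
    also have "\<dots> = (if v \<in> M then ?P {\<omega>. D \<omega> \<and> m' \<omega> = v \<and> \<Phi>S \<omega>} else 0)"
      by (rule sum_delta_mult[OF finM])
    also have "\<dots> = ?P {\<omega>. D \<omega> \<and> m' \<omega> = v \<and> \<Phi>S \<omega>}"
    proof (cases "v \<in> M")
      case False
      have "?P {\<omega>. mproc f n \<omega> (Suc k) = v \<and> (D \<omega> \<and> \<Phi>S \<omega>)} = 0" by (rule prob_notM[OF False])
      then show ?thesis using False unfolding m'_def by (simp add: conj_commute conj_left_commute)
    qed simp
    finally show ?thesis .
  qed
  also have "(\<Sum>x\<in>M. \<Sum>y\<le>k. tpow T M (Suc y) v x * ?P {\<omega>. xyf (fst (H \<omega>)) = (x, y) \<and> \<Psi>0 (H \<omega>) (B \<omega>)})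
      = (\<Sum>z\<in>M. T v z * ?P {\<omega>. mproc f n \<omega> k = z \<and> \<Psi>0 (H \<omega>) (B \<omega>)})"
  proof -
    have "(\<Sum>x\<in>M. \<Sum>y\<le>k. tpow T M (Suc y) v x * ?P {\<omega>. xyf (fst (H \<omega>)) = (x, y) \<and> \<Psi>0 (H \<omega>) (B \<omega>)})
        = (\<Sum>x\<in>M. \<Sum>y\<le>k. \<Sum>z\<in>M. T v z * (tpow T M y z x * ?P {\<omega>. xyf (fst (H \<omega>)) = (x, y) \<and> \<Psi>0 (H \<omega>) (B \<omega>)}))"
      by (simp add: sum_distrib_right mult.assoc)
    also have "\<dots> = (\<Sum>z\<in>M. \<Sum>x\<in>M. \<Sum>y\<le>k. T v z * (tpow T M y z x * ?P {\<omega>. xyf (fst (H \<omega>)) = (x, y) \<and> \<Psi>0 (H \<omega>) (B \<omega>)}))"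
      by (subst sum.swap) (subst (2) sum.swap, simp)
    also have "\<dots> = (\<Sum>z\<in>M. T v z * (\<Sum>x\<in>M. \<Sum>y\<le>k. tpow T M y z x * ?P {\<omega>. xyf (fst (H \<omega>)) = (x, y) \<and> \<Psi>0 (H \<omega>) (B \<omega>)}))"
      by (simp add: sum_distrib_left)
    also have "\<dots> = (\<Sum>z\<in>M. T v z * ?P {\<omega>. mproc f n \<omega> k = z \<and> \<Psi>0 (H \<omega>) (B \<omega>)})"
      using IH[where \<Phi>=\<Psi>0] unfolding H_def B_def by simp
    finally show ?thesis .
  qed
  finally have "(\<Sum>x\<in>M. \<Sum>y\<le>Suc k. tpow T M y v x * ?P
        {\<omega>. xyf (fst (hist f n g \<omega> (Suc k))) = (x,y) \<and> \<Phi> (hist f n g \<omega> (Suc k)) (fb \<omega> (Suc k))})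
      = ?P {\<omega>. m' \<omega> = v \<and> \<Phi> (hist f n g \<omega> (Suc k)) (fb \<omega> (Suc k))}"
    using L mk by simp
  then show ?thesis unfolding m'_def by simp
qed

lemma inv_all:
  assumes "1 \<le> k" "k < N"
  shows "measure_pmf.prob (law P0 W q N) {\<omega>. mproc f n \<omega> k = v \<and> \<Phi> (hist f n g \<omega> k) (fb \<omega> k)}
       = (\<Sum>x\<in>M. \<Sum>y\<le>k. tpow T M y v x * measure_pmf.prob (law P0 W q N)
        {\<omega>. xyf (fst (hist f n g \<omega> k)) = (x,y) \<and> \<Phi> (hist f n g \<omega> k) (fb \<omega> k)})"
  using assms
proof (induction k arbitrary: \<Phi> v rule: nat_induct_at_least)
  case base show ?case by (rule inv_base)
next
  case (Suc k)
  show ?case by (rule inv_step) (use Suc in auto)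
qed

end


lemma measure_cond_pmf':
  assumes "set_pmf p \<inter> s \<noteq> {}"
  shows "measure_pmf.prob (cond_pmf p s) B = measure_pmf.prob p (s \<inter> B) / measure_pmf.prob p s"
proof -
  have "measure_pmf.prob p s \<noteq> 0" using assms by (simp add: measure_pmf_zero_iff)
  then have ne: "emeasure (measure_pmf p) s \<noteq> 0" by (simp add: measure_pmf.emeasure_eq_measure)
  have "measure_pmf (cond_pmf p s) = uniform_measure (measure_pmf p) s" by (rule cond_pmf.rep_eq[OF assms])
  then show ?thesis
    using measure_uniform_measure[of "measure_pmf p" s B] ne by (simp add: measure_pmf.emeasure_eq_measure)
qed
context mf
begin

lemma cor:
  assumes t: "1 \<le> t"
    and Phi: "\<And>\<omega>. \<Phi> (hist f n g \<omega> t) (fb \<omega> t) \<Longrightarrow> xyf (fst (hist f n g \<omega> t)) = (x0, y0)"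
  shows "measure_pmf.prob (law P0 W q (Suc t)) {\<omega>. mproc f n \<omega> t = v \<and> \<Phi> (hist f n g \<omega> t) (fb \<omega> t)}
       = tpow T M y0 v x0 * measure_pmf.prob (law P0 W q (Suc t)) {\<omega>. \<Phi> (hist f n g \<omega> t) (fb \<omega> t)}"
proof -
  let ?P = "measure_pmf.prob (law P0 W q (Suc t))"
  let ?E = "{\<omega>. \<Phi> (hist f n g \<omega> t) (fb \<omega> t)}"
  have I: "?P {\<omega>. mproc f n \<omega> t = v \<and> \<Phi> (hist f n g \<omega> t) (fb \<omega> t)}
       = (\<Sum>x\<in>M. \<Sum>y\<le>t. tpow T M y v x * ?P {\<omega>. xyf (fst (hist f n g \<omega> t)) = (x,y) \<and> \<Phi> (hist f n g \<omega> t) (fb \<omega> t)})"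
    by (rule inv_all) (use t in auto)
  have trm: "tpow T M y v x * ?P {\<omega>. xyf (fst (hist f n g \<omega> t)) = (x,y) \<and> \<Phi> (hist f n g \<omega> t) (fb \<omega> t)}
      = (if x = x0 then (if y = y0 then tpow T M y0 v x0 * ?P ?E else 0) else 0)" for x y
  proof (cases "x = x0 \<and> y = y0")
    case True
    have "{\<omega>. xyf (fst (hist f n g \<omega> t)) = (x,y) \<and> \<Phi> (hist f n g \<omega> t) (fb \<omega> t)} = ?E"
      using Phi True by auto
    then show ?thesis using True by simp
  next
    case False
    have "{\<omega>. xyf (fst (hist f n g \<omega> t)) = (x,y) \<and> \<Phi> (hist f n g \<omega> t) (fb \<omega> t)} = {}"
      using Phi False by auto
    then show ?thesis using False by (simp only:) auto
  qed
  show ?thesis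
  proof (cases "?P ?E = 0")
    case True
    have "?P {\<omega>. mproc f n \<omega> t = v \<and> \<Phi> (hist f n g \<omega> t) (fb \<omega> t)} \<le> ?P ?E"
      by (intro measure_pmf.finite_measure_mono) auto
    then have "?P {\<omega>. mproc f n \<omega> t = v \<and> \<Phi> (hist f n g \<omega> t) (fb \<omega> t)} = 0"
      using True measure_nonneg[of "measure_pmf (law P0 W q (Suc t))" "{\<omega>. mproc f n \<omega> t = v \<and> \<Phi> (hist f n g \<omega> t) (fb \<omega> t)}"] by linarith
    then show ?thesis using True by simp
  next
    case False
    then obtain \<omega> where \<omega>: "\<omega> \<in> set_pmf (law P0 W q (Suc t))" "\<omega> \<in> ?E"
      using measure_pmf_zero_iff by blast
    have "x0 \<in> M \<and> y0 < t" using xy_good[OF t \<omega>(1), of g] Phi \<omega>(2) by auto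
    then have xy: "x0 \<in> M" "y0 \<le> t" by auto
    have "(\<Sum>x\<in>M. \<Sum>y\<le>t. tpow T M y v x * ?P {\<omega>. xyf (fst (hist f n g \<omega> t)) = (x,y) \<and> \<Phi> (hist f n g \<omega> t) (fb \<omega> t)})
       = (\<Sum>x\<in>M. if x = x0 then (\<Sum>y\<le>t. if y = y0 then tpow T M y0 v x0 * ?P ?E else 0) else 0)"
      by (rule sum.cong[OF refl]) (simp only: trm, simp)
    also have "\<dots> = tpow T M y0 v x0 * ?P ?E"
      using xy finM by (simp add: sum.delta)
    finally show ?thesis using I by simp
  qed
qed

lemma main:
  fixes g :: "nat \<Rightarrow> (real \<Rightarrow> real) option list \<Rightarrow> bool list \<Rightarrow> bool"
    and h :: "((real \<Rightarrow> real) \<Rightarrow> real) \<Rightarrow> (real \<Rightarrow> real)"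
    and c :: "(real \<Rightarrow> real) \<Rightarrow> (real \<Rightarrow> real) \<Rightarrow> bool \<Rightarrow> real"
    and t :: nat and X :: "(real \<Rightarrow> real) list" and Y :: "nat list" and A :: "bool list"
  assumes t_pos: "t \<ge> 1"
    and real: "measure_pmf.prob (law P0 W q (Suc t))
        {\<omega>. map fst (xyseq (fst (hist f n g \<omega> t))) = X \<and> map snd (xyseq (fst (hist f n g \<omega> t))) = Y
             \<and> snd (hist f n g \<omega> t) = A} > 0"
  shows "measure_pmf.expectation
           (cond_pmf (law P0 W q (Suc t))
              {\<omega>. map fst (xyseq (fst (hist f n g \<omega> t))) = X \<and> map snd (xyseq (fst (hist f n g \<omega> t))) = Y
                   \<and> snd (hist f n g \<omega> t) = A})
           (\<lambda>\<omega>. c (mproc f n \<omega> t) (mhat (law P0 W q (Suc t)) f n g h \<omega> t) (last (snd (hist f n g \<omega> t))))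
         = chat c h T (Mset n S) (last X) (last Y) (last A)"
proof -
  define \<Omega> where "\<Omega> = law P0 W q (Suc t)"
  define \<Phi>E where "\<Phi>E hh (cc::nat \<Rightarrow> bool) = (map fst (xyseq (fst hh)) = X \<and> map snd (xyseq (fst hh)) = Y \<and> snd hh = A)" for hh cc
  define E where "E = {\<omega>. \<Phi>E (hist f n g \<omega> t) (fb \<omega> t)}"
  have Eeq: "{\<omega>. map fst (xyseq (fst (hist f n g \<omega> t))) = X \<and> map snd (xyseq (fst (hist f n g \<omega> t))) = Y
                   \<and> snd (hist f n g \<omega> t) = A} = E"
    unfolding E_def \<Phi>E_def by simp
  define x0 where "x0 = last X"
  define y0 where "y0 = last Y"
  define a0 where "a0 = last A"
  have hE: "xyf (fst (hist f n g \<omega> t)) = (x0, y0) \<and> last (snd (hist f n g \<omega> t)) = a0"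
    if "\<Phi>E (hist f n g \<omega> t) cc" for \<omega> cc
  proof -
    let ?os = "fst (hist f n g \<omega> t)"
    have ne: "?os \<noteq> []" "xyseq ?os \<noteq> []" using length_hist[of f n g \<omega> t] length_xyseq[of ?os] t_pos by auto
    have "x0 = fst (last (xyseq ?os))" using that ne unfolding \<Phi>E_def x0_def by (auto simp: last_map)
    moreover have "y0 = snd (last (xyseq ?os))" using that ne unfolding \<Phi>E_def y0_def by (auto simp: last_map)
    ultimately have "xyf ?os = (x0, y0)" using last_xyseq[OF ne(1)] by (simp add: prod_eq_iff)
    moreover have "last (snd (hist f n g \<omega> t)) = a0" using that unfolding \<Phi>E_def a0_def by simp
    ultimately show ?thesis by simp
  qed
  have Epos: "measure_pmf.prob \<Omega> E > 0" using real Eeq \<Omega>_def by simp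
  have ne: "set_pmf \<Omega> \<inter> E \<noteq> {}" using Epos measure_pmf_zero_iff[of \<Omega> E] by auto
  define hh where "hh = h (\<lambda>v. tpow T M y0 v x0)"
  have mh: "mhat \<Omega> f n g h \<omega> t = hh" if \<omega>: "\<omega> \<in> set_pmf \<Omega>" "\<omega> \<in> E" for \<omega>
  proof -
    define HH where "HH = (fst (hist f n g \<omega> t), butlast (snd (hist f n g \<omega> t)))"
    define \<Phi>H where "\<Phi>H hs (cc::nat \<Rightarrow> bool) = ((fst hs, butlast (snd hs)) = HH)" for hs cc
    have xy\<omega>: "xyf (fst (hist f n g \<omega> t)) = (x0, y0)" using hE \<omega>(2) unfolding E_def by blast
    have PhiH: "xyf (fst (hist f n g \<omega>' t)) = (x0, y0)" if "\<Phi>H (hist f n g \<omega>' t) (fb \<omega>' t)" for \<omega>'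
      using that xy\<omega> unfolding \<Phi>H_def HH_def by simp
    have pos: "measure_pmf.prob \<Omega> {\<omega>'. \<Phi>H (hist f n g \<omega>' t) (fb \<omega>' t)} > 0"
      by (rule measure_pmf_posI[OF \<omega>(1)]) (simp add: \<Phi>H_def HH_def)
    have "cprob \<Omega> (\<lambda>\<omega>'. mproc f n \<omega>' t) (\<lambda>\<omega>'. (fst (hist f n g \<omega>' t), butlast (snd (hist f n g \<omega>' t)))) \<omega> v
        = tpow T M y0 v x0" for v
    proof -
      have "measure_pmf.prob \<Omega> {\<omega>'. mproc f n \<omega>' t = v \<and> \<Phi>H (hist f n g \<omega>' t) (fb \<omega>' t)}
          = tpow T M y0 v x0 * measure_pmf.prob \<Omega> {\<omega>'. \<Phi>H (hist f n g \<omega>' t) (fb \<omega>' t)}"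
        unfolding \<Omega>_def by (rule cor[OF t_pos PhiH])
      then show ?thesis using pos unfolding cprob_def \<Phi>H_def HH_def by simp
    qed
    then have "cprob \<Omega> (\<lambda>\<omega>'. mproc f n \<omega>' t) (\<lambda>\<omega>'. (fst (hist f n g \<omega>' t), butlast (snd (hist f n g \<omega>' t)))) \<omega>
        = (\<lambda>v. tpow T M y0 v x0)" by (rule ext)
    then show ?thesis unfolding mhat_def hh_def by simp
  qed
  define \<phi> where "\<phi> m = c m hh a0" for m
  have "measure_pmf.expectation (cond_pmf \<Omega> E)
           (\<lambda>\<omega>. c (mproc f n \<omega> t) (mhat \<Omega> f n g h \<omega> t) (last (snd (hist f n g \<omega> t))))
      = measure_pmf.expectation (cond_pmf \<Omega> E) (\<lambda>\<omega>. \<phi> (mproc f n \<omega> t))"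
  proof (intro integral_cong_AE)
    show "AE \<omega> in measure_pmf (cond_pmf \<Omega> E). c (mproc f n \<omega> t) (mhat \<Omega> f n g h \<omega> t) (last (snd (hist f n g \<omega> t)))
        = \<phi> (mproc f n \<omega> t)"
    proof (rule AE_pmfI)
      fix \<omega> assume "\<omega> \<in> set_pmf (cond_pmf \<Omega> E)"
      then have "\<omega> \<in> set_pmf \<Omega>" "\<omega> \<in> E" using set_cond_pmf[OF ne] by auto
      then show "c (mproc f n \<omega> t) (mhat \<Omega> f n g h \<omega> t) (last (snd (hist f n g \<omega> t))) = \<phi> (mproc f n \<omega> t)"
        using mh hE unfolding \<phi>_def E_def by auto
    qed
  qed auto
  also have "\<dots> = measure_pmf.expectation (map_pmf (\<lambda>\<omega>. mproc f n \<omega> t) (cond_pmf \<Omega> E)) \<phi>"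
    by simp
  also have "\<dots> = (\<Sum>m\<in>M. \<phi> m * pmf (map_pmf (\<lambda>\<omega>. mproc f n \<omega> t) (cond_pmf \<Omega> E)) m)"
  proof (rule integral_measure_pmf_real[OF finM])
    fix m assume "m \<in> set_pmf (map_pmf (\<lambda>\<omega>. mproc f n \<omega> t) (cond_pmf \<Omega> E))"
    then show "m \<in> M" using set_cond_pmf[OF ne] mproc_M unfolding \<Omega>_def by auto
  qed
  also have "\<dots> = (\<Sum>m\<in>M. \<phi> m * tpow T M y0 m x0)"
  proof (rule sum.cong[OF refl])
    fix m
    have "pmf (map_pmf (\<lambda>\<omega>. mproc f n \<omega> t) (cond_pmf \<Omega> E)) m
        = measure_pmf.prob (cond_pmf \<Omega> E) {\<omega>. mproc f n \<omega> t = m}"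
      by (simp add: pmf_map vimage_def)
    also have "\<dots> = measure_pmf.prob \<Omega> (E \<inter> {\<omega>. mproc f n \<omega> t = m}) / measure_pmf.prob \<Omega> E"
      by (rule measure_cond_pmf'[OF ne])
    also have "E \<inter> {\<omega>. mproc f n \<omega> t = m} = {\<omega>. mproc f n \<omega> t = m \<and> \<Phi>E (hist f n g \<omega> t) (fb \<omega> t)}"
      unfolding E_def by auto
    also have "measure_pmf.prob \<Omega> \<dots> = tpow T M y0 m x0 * measure_pmf.prob \<Omega> E"
      unfolding \<Omega>_def E_def by (rule cor[OF t_pos]) (use hE in blast)
    finally show "\<phi> m * pmf (map_pmf (\<lambda>\<omega>. mproc f n \<omega> t) (cond_pmf \<Omega> E)) m = \<phi> m * tpow T M y0 m x0"
      using Epos by simp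
  qed
  also have "\<dots> = chat c h T M x0 y0 a0"
    unfolding chat_def \<phi>_def hh_def by simp
  finally show ?thesis unfolding Eeq \<Omega>_def x0_def y0_def a0_def by simp
qed

end

theorem lemma3:
  fixes n :: nat and S :: "real set"
    and f :: "real \<Rightarrow> (real \<Rightarrow> real) \<Rightarrow> 'w::finite \<Rightarrow> real"
    and P0 :: "(nat \<Rightarrow> real) pmf" and W :: "(nat \<Rightarrow> 'w) pmf" and q :: real
    and g :: "nat \<Rightarrow> (real \<Rightarrow> real) option list \<Rightarrow> bool list \<Rightarrow> bool"
    and h :: "((real \<Rightarrow> real) \<Rightarrow> real) \<Rightarrow> (real \<Rightarrow> real)"
    and c :: "(real \<Rightarrow> real) \<Rightarrow> (real \<Rightarrow> real) \<Rightarrow> bool \<Rightarrow> real"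
    and T :: "(real \<Rightarrow> real) \<Rightarrow> (real \<Rightarrow> real) \<Rightarrow> real"
    and t :: nat and X :: "(real \<Rightarrow> real) list" and Y :: "nat list" and A :: "bool list"
  assumes n_pos: "n \<ge> 1"
    and S_fin: "finite S"
    and f_S: "\<forall>x\<in>S. \<forall>m\<in>Mset n S. \<forall>w. f x m w \<in> S"
    and P0_S: "\<forall>s\<in>set_pmf P0. \<forall>i<n. s i \<in> S"
    and exch: "\<forall>\<sigma>. \<sigma> permutes {..<n} \<longrightarrow> map_pmf (\<lambda>w. w \<circ> \<sigma>) W = W"
    and q: "0 \<le> q" "q \<le> 1"
    and c_nonneg: "\<forall>m1\<in>Mset n S. \<forall>m2\<in>Mset n S. \<forall>a. c m1 m2 a \<ge> 0"
    and T_def: "\<forall>\<tau>\<ge>1. \<forall>m m'.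
        measure_pmf.prob (law P0 W q (Suc \<tau>)) {\<omega>. mproc f n \<omega> \<tau> = m} > 0 \<longrightarrow>
        measure_pmf.prob (law P0 W q (Suc \<tau>)) {\<omega>. mproc f n \<omega> (Suc \<tau>) = m' \<and> mproc f n \<omega> \<tau> = m}
          / measure_pmf.prob (law P0 W q (Suc \<tau>)) {\<omega>. mproc f n \<omega> \<tau> = m} = T m' m"
    and t_pos: "t \<ge> 1"
    and real: "measure_pmf.prob (law P0 W q (Suc t))
        {\<omega>. map fst (xyseq (fst (hist f n g \<omega> t))) = X \<and> map snd (xyseq (fst (hist f n g \<omega> t))) = Y
             \<and> snd (hist f n g \<omega> t) = A} > 0"
  shows "measure_pmf.expectation
           (cond_pmf (law P0 W q (Suc t))
              {\<omega>. map fst (xyseq (fst (hist f n g \<omega> t))) = X \<and> map snd (xyseq (fst (hist f n g \<omega> t))) = Y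
                   \<and> snd (hist f n g \<omega> t) = A})
           (\<lambda>\<omega>. c (mproc f n \<omega> t) (mhat (law P0 W q (Suc t)) f n g h \<omega> t) (last (snd (hist f n g \<omega> t))))
         = chat c h T (Mset n S) (last X) (last Y) (last A)"
proof -
  interpret mf f n S P0 W q T
    by unfold_locales (use n_pos S_fin f_S P0_S exch T_def in auto)
  show ?thesis by (rule main[OF t_pos real])
qed

end
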